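(* Let $K$ be a field (of arbitrary characteristic). Let $\{n_i\mid i\ge1\}$ be a strictly increasing infinite sequence of positive integers such that $n_{i+1}-n_i\ne 1$ for infinitely many $i\ge1$, and let $V$ be the $K$-subspace of $K[x]$ spanned by the monomials $x^{n_i}$ ($i\ge1$). Then the following are equivalent: 1) $\mathfrak{r}(V)=\{0\}$; 2) $V$ is a Mathieu subspace of $K[x]$; 3) there is no integer $d\ge1$ such that $md\in\{n_i\mid i\ge1\}$ for all $m\ge1$.
   Context: For a subset $V$ of $K[x]$, $\mathfrak{r}(V)=\{a\in K[x]\mid a^m\in V\text{ for all } m\gg0\}$. A $K$-subspace $V$ of a commutative $K$-algebra $\mathcal{A}$ is a Mathieu subspace if for all $a,b\in\mathcal{A}$ with $a^m\in V$ for all $m\ge 1$, one has $a^mb\in V$ for all $m\gg 0$. *)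

theory Defs
  imports "HOL-Computational_Algebra.Polynomial"
begin

text \<open>The K-subspace of K[x] spanned by the monomials x^k, k in S:
  exactly the polynomials whose support lies in S.\<close>
definition monomial_span :: "nat set \<Rightarrow> 'a::field poly set" where
  "monomial_span S = {p. \<forall>k. coeff p k \<noteq> 0 \<longrightarrow> k \<in> S}"

definition radical_r :: "'a::field poly set \<Rightarrow> 'a poly set" where
  "radical_r V = {a. \<exists>N. \<forall>m\<ge>N. a ^ m \<in> V}"

definition is_subspace :: "'a::field poly set \<Rightarrow> bool" where
  "is_subspace V \<longleftrightarrow> 0 \<in> V \<and> (\<forall>p\<in>V. \<forall>q\<in>V. p + q \<in> V) \<and> (\<forall>c. \<forall>p\<in>V. smult c p \<in> V)"

definition mathieu_subspace :: "'a::field poly set \<Rightarrow> bool" where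
  "mathieu_subspace V \<longleftrightarrow> is_subspace V \<and>
     (\<forall>a b. (\<forall>m\<ge>1. a ^ m \<in> V) \<longrightarrow> (\<exists>N. \<forall>m\<ge>N. a ^ m * b \<in> V))"

end

theory Submission
  imports Defs
begin

lemma low_term:
  fixes a :: "'a::field poly"
  assumes "a \<noteq> 0"
  shows "\<exists>k. \<forall>m. coeff (a ^ m) (k * m) \<noteq> 0"
proof -
  obtain q where q: "a = [:- 0, 1:] ^ order 0 a * q" "\<not> [:- 0, 1:] dvd q"
    using order_decomp[OF assms] by blast
  have q0: "coeff q 0 \<noteq> 0"
    using q(2) by (simp add: dvd_iff_poly_eq_0 poly_0_coeff_0)
  define k where "k = order 0 a"
  have "a = monom 1 k * q" using q(1) by (simp add: k_def monom_altdef)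
  hence "\<And>m. a ^ m = monom 1 (k * m) * q ^ m"
    by (simp add: power_mult_distrib monom_power)
  hence "\<And>m. coeff (a ^ m) (k * m) = coeff q 0 ^ m"
    by (simp add: coeff_monom_mult coeff_0_power)
  thus ?thesis using q0 by (metis power_not_zero)
qed

lemma monom_in_span: "(monom (1::'a::field) j \<in> monomial_span S) = (j \<in> S)"
  by (auto simp: monomial_span_def coeff_monom)

theorem lemma3p4:
  fixes n :: "nat \<Rightarrow> nat"
    and V :: "'a::field poly set"
  assumes mono: "strict_mono n"
    and pos: "\<forall>i. n i > 0"
    and gaps: "infinite {i. n (Suc i) - n i \<noteq> 1}"
    and V_def: "V = monomial_span (range n)"
  shows "(radical_r V = {0} \<longleftrightarrow> mathieu_subspace V)
       \<and> (mathieu_subspace V \<longleftrightarrow>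
            \<not> (\<exists>d::nat. d \<ge> 1 \<and> (\<forall>m::nat. m \<ge> 1 \<longrightarrow> m * d \<in> range n)))"
proof -
  define S where "S = range n"
  have F0: "0 \<notin> S" using pos by (auto simp: S_def) (metis less_numeral_extra(3))
  have Fsub: "is_subspace V"
    by (auto simp: is_subspace_def V_def monomial_span_def coeff_add) (metis add.right_neutral add_0)
  have Fmon: "\<And>j. (monom (1::'a) j \<in> V) = (j \<in> S)"
    by (simp add: V_def S_def monom_in_span)
  have V0: "(0::'a poly) \<in> V" using Fsub by (simp add: is_subspace_def)
  have Fnz: "\<exists>d\<ge>1. \<forall>m\<ge>1. m*d \<in> S" if "a \<noteq> 0" "\<forall>m\<ge>N. a^m \<in> V" for a :: "'a poly" and N
  proof -
    obtain k where k: "\<And>m. coeff (a ^ m) (k * m) \<noteq> 0" using low_term[of a] \<open>a \<noteq> 0\<close> by blast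
    define N' where "N' = max N 1"
    have inS: "k * m \<in> S" if "m \<ge> N'" for m
    proof -
      have "a ^ m \<in> V" using that \<open>\<forall>m\<ge>N. a^m \<in> V\<close> by (simp add: N'_def)
      thus ?thesis using k[of m] by (auto simp: V_def S_def monomial_span_def)
    qed
    have "k \<noteq> 0" using inS[of N'] F0 by (metis mult_zero_left order_refl)
    moreover have "\<forall>m\<ge>1. m * (k * N') \<in> S"
    proof (intro allI impI)
      fix m :: nat assume "m \<ge> 1"
      have "m * N' \<ge> N'" using \<open>m \<ge> 1\<close> by simp
      from inS[OF this] show "m * (k * N') \<in> S" by (simp add: ac_simps)
    qed
    moreover have "N' \<ge> 1" by (simp add: N'_def)
    ultimately show ?thesis
      by (intro exI[of _ "k * N'"]) (auto simp: Suc_le_eq)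
  qed
  have Finf: "infinite (- S)"
  proof
    assume fin: "finite (- S)"
    let ?G = "{i. n (Suc i) - n i \<noteq> 1}"
    have "(\<lambda>i. n i + 1) ` ?G \<subseteq> - S"
    proof
      fix x assume "x \<in> (\<lambda>i. n i + 1) ` ?G"
      then obtain i where i: "i \<in> ?G" "x = n i + 1" by blast
      have lt: "n i < n (Suc i)" using mono by (simp add: strict_mono_def)
      hence lt2: "n i + 1 < n (Suc i)" using i(1) by auto
      show "x \<in> - S"
      proof
        assume "x \<in> S"
        then obtain j where j: "n j = n i + 1" using i(2) by (auto simp: S_def)
        have "i < j" using j mono by (metis less_add_one strict_mono_less)
        moreover have "j < Suc i" using j lt2 mono by (metis strict_mono_less)
        ultimately show False by simp
      qed
    qed
    moreover have "inj_on (\<lambda>i. n i + 1) ?G"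
      using strict_mono_imp_inj_on[OF mono] by (auto simp: inj_on_def)
    ultimately have "finite ?G" using fin finite_subset finite_imageD by blast
    thus False using gaps by simp
  qed
  have Fnotm: "\<not> mathieu_subspace V" if "d \<ge> 1" "\<forall>m\<ge>1. m*d \<in> S" for d :: nat
  proof
    assume M: "mathieu_subspace V"
    have "- S \<subseteq> (\<Union>r<d. {k. k \<notin> S \<and> k mod d = r})"
      using that(1) by auto
    then obtain r where r: "r < d" "infinite {k. k \<notin> S \<and> k mod d = r}"
      using Finf by (meson finite_UN_I finite_lessThan finite_subset lessThan_iff)
    have "\<forall>m\<ge>1. monom (1::'a) d ^ m \<in> V"
      using that(2) by (simp add: monom_power Fmon ac_simps)
    then obtain N where N: "\<forall>m\<ge>N. monom (1::'a) d ^ m * monom 1 r \<in> V"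
      using M unfolding mathieu_subspace_def by blast
    obtain k where k: "k \<in> {k. k \<notin> S \<and> k mod d = r}" "N * d \<le> k"
      using r(2) by (meson infinite_nat_iff_unbounded_le)
    define m where "m = k div d"
    have km: "k = m * d + r" using k(1) by (simp add: m_def) (metis div_mult_mod_eq)
    have "N \<le> m"
    proof (rule ccontr)
      assume "\<not> N \<le> m"
      hence "m + 1 \<le> N" by simp
      hence "(m+1) * d \<le> N * d" using mult_le_mono1 by blast
      thus False using k(2) km r(1) by (simp add: algebra_simps)
    qed
    with N have "monom (1::'a) d ^ m * monom 1 r \<in> V" by blast
    hence "monom (1::'a) k \<in> V" by (simp add: monom_power mult_monom km ac_simps)
    thus False using k(1) Fmon by blast
  qed
  have RM: "mathieu_subspace V" if R: "radical_r V = {0}"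
    unfolding mathieu_subspace_def
  proof (intro conjI Fsub allI impI)
    fix a b :: "'a poly" assume "\<forall>m\<ge>1. a ^ m \<in> V"
    hence "a \<in> radical_r V" by (auto simp: radical_r_def)
    hence "a = 0" using R by simp
    thus "\<exists>N. \<forall>m\<ge>N. a ^ m * b \<in> V"
      using V0 by (intro exI[of _ 1]) (auto simp: power_0_left)
  qed
  have DR: "radical_r V = {0}" if nD: "\<not> (\<exists>d\<ge>1. \<forall>m\<ge>1. m*d \<in> S)"
  proof
    show "radical_r V \<subseteq> {0}"
    proof
      fix a assume "a \<in> radical_r V"
      then obtain N where "\<forall>m\<ge>N. a^m \<in> V" by (auto simp: radical_r_def)
      thus "a \<in> {0}" using Fnz nD by blast
    qed
    show "{0} \<subseteq> radical_r V"
      using V0 by (auto simp: radical_r_def intro!: exI[of _ 1] simp: power_0_left)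
  qed
  show ?thesis
    using RM DR Fnotm unfolding S_def by blast
qed

end
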